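(* Let $\psi$ be an Orlicz function satisfying the $\Delta^2$-Condition and let $a>1$. Then there exist $C>0$ and $x_1>0$ such that $\psi^{-1}(x^a)\le C\,\psi^{-1}(x)$ for all $x\ge x_1$. Consequently, for any $\alpha>-1$, $N\ge1$ and any holomorphic $\phi:\mathbb{B}_N\to\mathbb{B}_N$, $$\lim_{|z|\to1}\frac{\psi^{-1}\big(1/(1-|\phi(z)|)^{N+\alpha+1}\big)}{\psi^{-1}\big(1/(1-|z|)^{N+\alpha+1}\big)}=0\iff\lim_{|z|\to1}\frac{\psi^{-1}\big(1/(1-|\phi(z)|)\big)}{\psi^{-1}\big(1/(1-|z|)\big)}=0.$$
   Context: An Orlicz function is a strictly convex $\psi:[0,\infty)\to[0,\infty)$ with $\psi(0)=0$, continuous at $0$, and $\psi(x)/x\to\infty$; $\psi^{-1}$ denotes its inverse. $\psi$ satisfies the $\Delta^2$-Condition if there exist $C>0$, $x_0>0$ with $\psi(x)^2\le\psi(Cx)$ for all $x\ge x_0$. $\mathbb{B}_N$ is the open unit ball of $\mathbb{C}^N$. *)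

theory Defs
  imports "HOL-Analysis.Analysis"
begin

definition strictly_convex_on :: "real set \<Rightarrow> (real \<Rightarrow> real) \<Rightarrow> bool" where
  "strictly_convex_on S f \<longleftrightarrow> convex S \<and>
     (\<forall>x\<in>S. \<forall>y\<in>S. \<forall>t. x \<noteq> y \<and> 0 < t \<and> t < 1 \<longrightarrow>
        f ((1 - t) * x + t * y) < (1 - t) * f x + t * f y)"

text \<open>Orlicz function psi on [0,inf) (values on negative reals are irrelevant).\<close>
definition orlicz_function :: "(real \<Rightarrow> real) \<Rightarrow> bool" where
  "orlicz_function psi \<longleftrightarrow>
     (\<forall>x\<ge>0. psi x \<ge> 0) \<and>
     strictly_convex_on {0..} psi \<and>
     psi 0 = 0 \<and>
     continuous (at 0 within {0..}) psi \<and>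
     filterlim (\<lambda>x. psi x / x) at_top at_top"

definition orlicz_inv :: "(real \<Rightarrow> real) \<Rightarrow> real \<Rightarrow> real" where
  "orlicz_inv psi y = (THE x. x \<ge> 0 \<and> psi x = y)"

definition delta2_condition :: "(real \<Rightarrow> real) \<Rightarrow> bool" where
  "delta2_condition psi \<longleftrightarrow>
     (\<exists>C>0. \<exists>x0>0. \<forall>x\<ge>x0. (psi x)\<^sup>2 \<le> psi (C * x))"

text \<open>Holomorphic maps between open subsets of C^N, with C^N modelled as complex ^ 'n:
  real Frechet differentiable at every point with complex-linear derivative.\<close>
definition holomorphic_vec_on :: "(complex ^ 'n \<Rightarrow> complex ^ 'm) \<Rightarrow> (complex ^ 'n) set \<Rightarrow> bool" where
  "holomorphic_vec_on f S \<longleftrightarrow>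
     (\<forall>z\<in>S. \<exists>D. (f has_derivative D) (at z) \<and>
        (\<forall>v. D (\<chi> i. \<i> * v $ i) = (\<chi> j. \<i> * D v $ j)))"

end

theory Submission imports Defs begin

lemma orl_pos:
  assumes "orlicz_function psi" "y > 0" shows "psi y > 0"
proof -
  have sc: "strictly_convex_on {0..} psi" and p0: "psi 0 = 0" and nn: "\<forall>x\<ge>0. psi x \<ge> 0"
    using assms(1) unfolding orlicz_function_def by auto
  have H: "\<And>x y t. x\<ge>0 \<Longrightarrow> y\<ge>0 \<Longrightarrow> x\<noteq>y \<Longrightarrow> 0<t \<Longrightarrow> t<1 \<Longrightarrow> psi((1-t)*x+t*y) < (1-t)*psi x + t*psi y"
    using sc unfolding strictly_convex_on_def by auto
  have "psi ((1 - 1/2) * 0 + (1/2) * y) < (1 - 1/2) * psi 0 + (1/2) * psi y"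
    using H[of 0 y "1/2"] assms(2) by simp
  moreover have "psi ((1 - 1/2) * 0 + (1/2) * y) \<ge> 0" using nn assms(2) by auto
  ultimately show ?thesis using p0 by simp
qed

lemma orl_mono:
  assumes "orlicz_function psi" "0 \<le> x" "x < y" shows "psi x < psi y"
proof (cases "x = 0")
  case True then show ?thesis using orl_pos[OF assms(1), of y] assms assms(1)
    unfolding orlicz_function_def by auto
next
  case False
  have sc: "strictly_convex_on {0..} psi" and p0: "psi 0 = 0"
    using assms(1) unfolding orlicz_function_def by auto
  define t where "t = x / y"
  have ty: "0 < t" "t < 1" using False assms by (auto simp: t_def)
  have H: "\<And>x y t. x\<ge>0 \<Longrightarrow> y\<ge>0 \<Longrightarrow> x\<noteq>y \<Longrightarrow> 0<t \<Longrightarrow> t<1 \<Longrightarrow> psi((1-t)*x+t*y) < (1-t)*psi x + t*psi y"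
    using sc unfolding strictly_convex_on_def by auto
  have "psi ((1 - t) * 0 + t * y) < (1 - t) * psi 0 + t * psi y"
    using H[of 0 y t] ty assms by simp
  moreover have "(1 - t) * 0 + t * y = x" using assms by (simp add: t_def)
  moreover have "t * psi y < psi y" using ty orl_pos[OF assms(1), of y] assms by simp
  ultimately show ?thesis using p0 by simp
qed

lemma orl_le_iff:
  assumes "orlicz_function psi" "0 \<le> x" "0 \<le> y" shows "psi x \<le> psi y \<longleftrightarrow> x \<le> y"
proof
  assume "psi x \<le> psi y" then show "x \<le> y" using orl_mono[OF assms(1), of y x] assms by linarith
next
  assume "x \<le> y" then show "psi x \<le> psi y" using orl_mono[OF assms(1), of x y] assms
    by (cases "x = y") auto
qed

lemma orl_cont:
  assumes "orlicz_function psi" shows "continuous_on {0..} psi"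
proof -
  have sc: "strictly_convex_on {0..} psi" and c0: "continuous (at 0 within {0..}) psi"
    using assms unfolding orlicz_function_def by auto
  have "convex_on {0<..} psi"
  proof (rule convex_onI)
    fix t x y :: real assume h: "t > 0" "t < 1" "x \<in> {0<..}" "y \<in> {0<..}"
    show "psi ((1 - t) *\<^sub>R x + t *\<^sub>R y) \<le> (1 - t) * psi x + t * psi y"
    proof (cases "x = y")
      case True then show ?thesis by (simp add: algebra_simps)
    next
      case False then show ?thesis using sc h unfolding strictly_convex_on_def
        by (auto intro!: less_imp_le)
    qed
  qed (simp add: convex_real_interval)
  then have "continuous_on {0<..} psi" by (intro convex_on_continuous) auto
  then have "\<And>x. x > 0 \<Longrightarrow> isCont psi x"
    by (simp add: continuous_on_eq_continuous_at)
  show ?thesis unfolding continuous_on_eq_continuous_within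
  proof
    fix x :: real assume "x \<in> {0..}"
    show "continuous (at x within {0..}) psi"
    proof (cases "x = 0")
      case True then show ?thesis using c0 by simp
    next
      case False then show ?thesis using \<open>x \<in> {0..}\<close> \<open>\<And>x. x > 0 \<Longrightarrow> isCont psi x\<close>
        by (auto intro: continuous_at_imp_continuous_at_within)
    qed
  qed
qed

lemma orl_unbounded:
  assumes "orlicz_function psi" shows "\<exists>M\<ge>0. psi M \<ge> y"
proof -
  have "filterlim (\<lambda>x. psi x / x) at_top at_top" using assms unfolding orlicz_function_def by auto
  then have "eventually (\<lambda>x. psi x / x \<ge> 1) at_top" by (simp add: filterlim_at_top)
  then obtain N where N: "\<And>x. x \<ge> N \<Longrightarrow> psi x / x \<ge> 1" unfolding eventually_at_top_linorder by blast
  define x where "x = max N (max 1 y)"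
  have "x \<ge> N" by (simp add: x_def)
  then have "psi x / x \<ge> 1" using N by blast
  moreover have "x \<ge> 1" "x \<ge> y" by (auto simp: x_def)
  ultimately have "psi x \<ge> x" by (simp add: field_simps)
  then show ?thesis using \<open>x \<ge> 1\<close> \<open>x \<ge> y\<close> by (intro exI[of _ x]) auto
qed

lemma orl_inv:
  assumes "orlicz_function psi" "0 \<le> y"
  shows "orlicz_inv psi y \<ge> 0 \<and> psi (orlicz_inv psi y) = y"
proof -
  obtain M where M: "M \<ge> 0" "psi M \<ge> y" using orl_unbounded[OF assms(1)] by blast
  have p0: "psi 0 = 0" using assms unfolding orlicz_function_def by auto
  have "continuous_on {0..M} psi"
    using orl_cont[OF assms(1)] by (rule continuous_on_subset) auto
  then obtain x where x: "0 \<le> x" "psi x = y" using IVT'[of psi 0 y M] M p0 assms by auto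
  have "\<exists>!x. x \<ge> 0 \<and> psi x = y"
  proof (rule ex1I[of _ x])
    fix z assume "0 \<le> z \<and> psi z = y"
    then show "z = x" using x orl_le_iff[OF assms(1), of z x] orl_le_iff[OF assms(1), of x z] by auto
  qed (use x in auto)
  then show ?thesis unfolding orlicz_inv_def by (rule theI')
qed

lemma orl_inv_le_iff:
  assumes "orlicz_function psi" "0 \<le> y" "0 \<le> x"
  shows "orlicz_inv psi y \<le> x \<longleftrightarrow> y \<le> psi x"
proof -
  have "orlicz_inv psi y \<ge> 0" "psi (orlicz_inv psi y) = y" using orl_inv[OF assms(1,2)] by auto
  then show ?thesis using orl_le_iff[OF assms(1) _ assms(3), of "orlicz_inv psi y"] by simp
qed

lemma orl_inv_mono:
  assumes "orlicz_function psi" "0 \<le> y1" "y1 \<le> y2"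
  shows "orlicz_inv psi y1 \<le> orlicz_inv psi y2"
proof -
  have "orlicz_inv psi y2 \<ge> 0" "psi (orlicz_inv psi y2) = y2" using orl_inv[OF assms(1)] assms by auto
  then show ?thesis using orl_inv_le_iff[OF assms(1,2), of "orlicz_inv psi y2"] assms by simp
qed

lemma orl_inv_pos:
  assumes "orlicz_function psi" "0 < y" shows "orlicz_inv psi y > 0"
proof -
  have p0: "psi 0 = 0" using assms unfolding orlicz_function_def by auto
  have "orlicz_inv psi y \<ge> 0" "psi (orlicz_inv psi y) = y" using orl_inv[OF assms(1)] assms by auto
  then show ?thesis using p0 assms by (cases "orlicz_inv psi y = 0") auto
qed

lemma orl_inv_lim:
  assumes "orlicz_function psi" shows "filterlim (orlicz_inv psi) at_top at_top"
  unfolding filterlim_at_top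
proof
  fix Z :: real
  show "eventually (\<lambda>y. Z \<le> orlicz_inv psi y) at_top"
    using eventually_ge_at_top[of "psi (max Z 0)"]
  proof eventually_elim
    case (elim y)
    have "0 \<le> psi (max Z 0)" using assms unfolding orlicz_function_def by auto
    then have "max Z 0 \<le> orlicz_inv psi y"
      using orl_inv[OF assms(1), of y] orl_le_iff[OF assms(1), of "max Z 0" "orlicz_inv psi y"] elim
      by auto
    then show ?case by simp
  qed
qed


lemma orl_part1:
  assumes o: "orlicz_function psi" and d: "delta2_condition psi" and a: "a > 1"
  shows "\<exists>C>0. \<exists>x1>0. \<forall>x\<ge>x1. orlicz_inv psi (x powr a) \<le> C * orlicz_inv psi x"
proof -
  obtain C0 x0 where C0: "C0>0" "x0>0" "\<forall>x\<ge>x0. (psi x)^2 \<le> psi (C0*x)"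
    using d unfolding delta2_condition_def by auto
  define C where "C = max C0 1"
  have C1: "C \<ge> 1" by (simp add: C_def)
  have D: "(psi x)^2 \<le> psi (C*x)" if "x \<ge> x0" for x
  proof -
    have "C0*x \<le> C*x" using that C0 by (intro mult_right_mono) (auto simp: C_def)
    then have "psi (C0*x) \<le> psi (C*x)" using orl_le_iff[OF o, of "C0*x" "C*x"] that C0 by simp
    moreover have "(psi x)^2 \<le> psi (C0*x)" using C0(3) that by blast
    ultimately show ?thesis by linarith
  qed
  have nn: "\<And>x. x \<ge> 0 \<Longrightarrow> psi x \<ge> 0" using o unfolding orlicz_function_def by auto
  have P: "(psi x)^(2^k) \<le> psi (C^k*x)" if x: "x \<ge> x0" for x k
  proof (induction k)
    case 0 show ?case by simp
  next
    case (Suc k)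
    have "1 \<le> C^k" using C1 by (rule one_le_power)
    then have "1*x \<le> C^k*x" using x C0 by (intro mult_right_mono) auto
    then have "x \<le> C^k*x" by simp
    then have ge: "C^k*x \<ge> x0" using x by linarith
    have "(psi x)^(2^Suc k) = ((psi x)^(2^k))^2" by (simp add: power_mult[symmetric] mult.commute)
    also have "\<dots> \<le> (psi (C^k*x))^2"
      by (rule power_mono[OF Suc.IH]) (use nn x C0 in auto)
    also have "\<dots> \<le> psi (C*(C^k*x))" using D[OF ge] .
    also have "C*(C^k*x) = C^Suc k * x" by simp
    finally show ?case .
  qed
  define k where "k = nat \<lceil>a\<rceil>"
  have "k < 2^k" by (rule less_exp)
  then have "real k < real (2^k)" by (simp only: of_nat_less_iff)
  moreover have "real k = real_of_int \<lceil>a\<rceil>" unfolding k_def using a by simp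
  moreover have "a \<le> real_of_int \<lceil>a\<rceil>" by (rule le_of_int_ceiling)
  ultimately have k: "a \<le> real (2^k)" by linarith
  define x1 where "x1 = max 1 (psi x0)"
  show ?thesis
  proof (intro exI conjI allI impI)
    show "C^k > 0" using C1 by simp
    show "x1 > 0" by (simp add: x1_def)
    fix x assume x: "x1 \<le> x"
    then have x1': "x \<ge> 1" "x \<ge> psi x0" by (auto simp: x1_def)
    define y where "y = orlicz_inv psi x"
    have y: "y \<ge> 0" "psi y = x" using orl_inv[OF o, of x] x1' by (auto simp: y_def)
    have "x0 \<le> y" using orl_le_iff[OF o, of x0 y] y x1' C0 by simp
    have "x powr a \<le> x powr (real (2^k))" by (rule powr_mono) (use k x1' in auto)
    also have "\<dots> = x^(2^k)" using x1' by (intro powr_realpow) auto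
    also have "\<dots> = psi y ^ 2^k" using y by simp
    also have "\<dots> \<le> psi (C^k*y)" using P[OF \<open>x0 \<le> y\<close>] .
    finally have "x powr a \<le> psi (C^k * y)" .
    moreover have "C^k*y \<ge> 0" using C1 y by simp
    ultimately show "orlicz_inv psi (x powr a) \<le> C^k * orlicz_inv psi x"
      using orl_inv_le_iff[OF o, of "x powr a" "C^k*y"] unfolding y_def by simp
  qed
qed

lemma bound1:
  assumes o: "orlicz_function psi" and C: "C > 0" "\<forall>x\<ge>x1. orlicz_inv psi (x powr b) \<le> C * orlicz_inv psi x"
    and b: "b > 1" and u: "u \<ge> 1" and v: "v \<ge> 1" "v \<ge> x1"
  shows "norm (orlicz_inv psi u / orlicz_inv psi v) \<le> C * (orlicz_inv psi (u powr b) / orlicz_inv psi (v powr b))"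
proof -
  let ?I = "orlicz_inv psi"
  have Iu: "?I u > 0" and Iv: "?I v > 0" using orl_inv_pos[OF o] u v by auto
  have "v powr b > 0" using v by simp
  then have Ivb: "?I (v powr b) > 0" using orl_inv_pos[OF o] by auto
  have "u \<le> u powr b" using powr_mono[of 1 b u] u b by simp
  then have Iub: "?I u \<le> ?I (u powr b)" using orl_inv_mono[OF o] u by auto
  have "?I (v powr b) / C \<le> ?I v" using C v by (simp add: divide_le_eq mult.commute)
  then have "?I u / ?I v \<le> ?I (u powr b) / (?I (v powr b) / C)"
    using Iub Iu Ivb C by (intro frac_le) auto
  also have "\<dots> = C * (?I (u powr b) / ?I (v powr b))" by simp
  finally show ?thesis using Iu Iv by simp
qed

lemma bound2:
  assumes o: "orlicz_function psi" and C: "C > 0" "\<forall>x\<ge>x1. orlicz_inv psi (x powr b) \<le> C * orlicz_inv psi x"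
    and b: "b > 1" and u: "u \<ge> 1" and v: "v \<ge> 1" and x1: "x1 > 0"
  shows "norm (orlicz_inv psi (u powr b) / orlicz_inv psi (v powr b))
     \<le> orlicz_inv psi (x1 powr b) / orlicz_inv psi v + C * (orlicz_inv psi u / orlicz_inv psi v)"
proof -
  let ?I = "orlicz_inv psi"
  have Iu: "?I u > 0" and Iv: "?I v > 0" using orl_inv_pos[OF o] u v by auto
  have "u powr b > 0" using u by simp
  then have Iub: "?I (u powr b) > 0" using orl_inv_pos[OF o] by auto
  have "x1 powr b > 0" using x1 by simp
  then have K: "?I (x1 powr b) \<ge> 0" using orl_inv_pos[OF o] by (meson less_imp_le)
  have "v \<le> v powr b" using powr_mono[of 1 b v] v b by simp
  then have Ivb: "?I v \<le> ?I (v powr b)" using orl_inv_mono[OF o] v by auto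
  have num: "?I (u powr b) \<le> ?I (x1 powr b) + C * ?I u"
  proof (cases "u \<ge> x1")
    case True then show ?thesis using C K by force
  next
    case False
    then have "u powr b \<le> x1 powr b" using u b by (intro powr_mono2) auto
    then have "?I (u powr b) \<le> ?I (x1 powr b)" using orl_inv_mono[OF o] u by auto
    then show ?thesis using C Iu by (smt (verit) mult_pos_pos)
  qed
  have "norm (?I (u powr b) / ?I (v powr b)) = ?I (u powr b) / ?I (v powr b)" using Iub Iv Ivb by simp
  also have "\<dots> \<le> (?I (x1 powr b) + C * ?I u) / ?I v"
    using num Iub Iv Ivb by (intro frac_le) auto
  also have "\<dots> = ?I (x1 powr b) / ?I v + C * (?I u / ?I v)" by (simp add: add_divide_distrib)
  finally show ?thesis .
qed

lemma lim_v: "filterlim (\<lambda>t::real. 1 / (1 - t)) at_top (at_left 1)"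
proof -
  have "((\<lambda>t::real. 1 - t) \<longlongrightarrow> 1 - 1) (at_left 1)"
    by (intro tendsto_intros)
  then have "((\<lambda>t::real. 1 - t) \<longlongrightarrow> 0) (at_left 1)" by simp
  moreover have "eventually (\<lambda>t::real. 0 < 1 - t) (at_left 1)"
    by (rule eventually_mono[OF eventually_at_left_real[of 0 "1::real"]]) auto
  ultimately have "filterlim (\<lambda>t::real. inverse (1 - t)) at_top (at_left 1)"
    by (rule filterlim_inverse_at_top)
  then show ?thesis by (simp add: inverse_eq_divide)
qed

theorem mainTheorem8:
  fixes psi :: "real \<Rightarrow> real"
  assumes "orlicz_function psi" and "delta2_condition psi"
  shows "(\<forall>a>1. \<exists>C>0. \<exists>x1>0. \<forall>x\<ge>x1.
            orlicz_inv psi (x powr a) \<le> C * orlicz_inv psi x)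
    \<and> (\<forall>(alpha::real) (phi :: complex ^ 'n \<Rightarrow> complex ^ 'n).
          alpha > -1 \<longrightarrow> holomorphic_vec_on phi (ball 0 1) \<longrightarrow> phi ` ball 0 1 \<subseteq> ball 0 1 \<longrightarrow>
          ((((\<lambda>z. orlicz_inv psi ((1 / (1 - norm (phi z))) powr (real CARD('n) + alpha + 1))
                 / orlicz_inv psi ((1 / (1 - norm z)) powr (real CARD('n) + alpha + 1)))
              \<longlongrightarrow> 0) (filtercomap norm (at_left 1)))
           \<longleftrightarrow>
           (((\<lambda>z. orlicz_inv psi (1 / (1 - norm (phi z))) / orlicz_inv psi (1 / (1 - norm z)))
              \<longlongrightarrow> 0) (filtercomap norm (at_left 1)))))"
proof (intro conjI allI impI)
  note o = assms(1)
  fix a :: real assume "a > 1"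
  then show "\<exists>C>0. \<exists>x1>0. \<forall>x\<ge>x1. orlicz_inv psi (x powr a) \<le> C * orlicz_inv psi x"
    using orl_part1[OF assms] by blast
next
  note o = assms(1)
  fix alpha :: real and phi :: "complex ^ 'n \<Rightarrow> complex ^ 'n"
  assume al: "alpha > -1" and "holomorphic_vec_on phi (ball 0 1)" and sub: "phi ` ball 0 1 \<subseteq> ball 0 1"
  define b where "b = real CARD('n) + alpha + 1"
  have "real CARD('n) \<ge> 1" by simp
  then have b1: "b > 1" using al unfolding b_def by linarith
  let ?F = "filtercomap norm (at_left (1::real)) :: (complex ^ 'n) filter"
  let ?I = "orlicz_inv psi"
  obtain C x1 where C: "C>0" "x1>0" "\<forall>x\<ge>x1. ?I (x powr b) \<le> C * ?I x"
    using orl_part1[OF assms b1] by blast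
  have ev: "eventually (\<lambda>z. norm z < 1) ?F"
    by (rule eventually_mono[OF eventually_filtercomapI[OF eventually_at_left_real[of 0 "1::real"]]]) auto
  have lim: "filterlim (\<lambda>z. 1/(1-norm z)) at_top ?F"
    by (rule filterlim_compose[OF lim_v filterlim_filtercomap])
  have evx: "eventually (\<lambda>z. 1/(1-norm z) \<ge> max 1 x1) ?F"
    using lim unfolding filterlim_at_top by blast
  have evp: "eventually (\<lambda>z. norm (phi z) < 1) ?F"
  proof (rule eventually_mono[OF ev])
    fix z :: "complex ^ 'n" assume "norm z < 1"
    then have "z \<in> ball 0 1" by simp
    then have "phi z \<in> ball 0 1" using sub by blast
    then show "norm (phi z) < 1" by simp
  qed
  have uge: "1 \<le> 1 / (1 - norm w)" if "norm w < 1" for w :: "complex ^ 'n"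
  proof -
    have "0 < 1 - norm w" "1 - norm w \<le> 1" using that by auto
    then show ?thesis by (simp add: le_divide_eq)
  qed
  show "((\<lambda>z. ?I ((1 / (1 - norm (phi z))) powr (real CARD('n) + alpha + 1))
                 / ?I ((1 / (1 - norm z)) powr (real CARD('n) + alpha + 1))) \<longlongrightarrow> 0) ?F
        \<longleftrightarrow> ((\<lambda>z. ?I (1 / (1 - norm (phi z))) / ?I (1 / (1 - norm z))) \<longlongrightarrow> 0) ?F"
    unfolding b_def[symmetric]
  proof
    assume L: "((\<lambda>z. ?I ((1 / (1 - norm (phi z))) powr b) / ?I ((1 / (1 - norm z)) powr b)) \<longlongrightarrow> 0) ?F"
    show "((\<lambda>z. ?I (1 / (1 - norm (phi z))) / ?I (1 / (1 - norm z))) \<longlongrightarrow> 0) ?F"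
    proof (rule Lim_null_comparison)
      show "eventually (\<lambda>z. norm (?I (1 / (1 - norm (phi z))) / ?I (1 / (1 - norm z)))
          \<le> C * (?I ((1 / (1 - norm (phi z))) powr b) / ?I ((1 / (1 - norm z)) powr b))) ?F"
        using evp evx proof eventually_elim
        case (elim z)
        show ?case by (rule bound1[OF o C(1) C(3) b1 uge[OF elim(1)]]) (use elim(2) in auto)
      qed
      show "((\<lambda>z. C * (?I ((1 / (1 - norm (phi z))) powr b) / ?I ((1 / (1 - norm z)) powr b))) \<longlongrightarrow> 0) ?F"
        using tendsto_mult[OF tendsto_const[of C] L] by simp
    qed
  next
    assume R: "((\<lambda>z. ?I (1 / (1 - norm (phi z))) / ?I (1 / (1 - norm z))) \<longlongrightarrow> 0) ?F"
    show "((\<lambda>z. ?I ((1 / (1 - norm (phi z))) powr b) / ?I ((1 / (1 - norm z)) powr b)) \<longlongrightarrow> 0) ?F"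
    proof (rule Lim_null_comparison)
      show "eventually (\<lambda>z. norm (?I ((1 / (1 - norm (phi z))) powr b) / ?I ((1 / (1 - norm z)) powr b))
          \<le> ?I (x1 powr b) / ?I (1 / (1 - norm z)) + C * (?I (1 / (1 - norm (phi z))) / ?I (1 / (1 - norm z)))) ?F"
        using evp evx proof eventually_elim
        case (elim z)
        show ?case by (rule bound2[OF o C(1) C(3) b1 uge[OF elim(1)] _ C(2)]) (use elim(2) in auto)
      qed
      have "filterlim (\<lambda>z. ?I (1 / (1 - norm z))) at_top ?F"
        by (rule filterlim_compose[OF orl_inv_lim[OF o] lim])
      then have "((\<lambda>z. ?I (x1 powr b) / ?I (1 / (1 - norm z))) \<longlongrightarrow> 0) ?F"
        by (intro tendsto_divide_0[OF tendsto_const] filterlim_at_top_imp_at_infinity)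
      then show "((\<lambda>z. ?I (x1 powr b) / ?I (1 / (1 - norm z)) + C * (?I (1 / (1 - norm (phi z))) / ?I (1 / (1 - norm z)))) \<longlongrightarrow> 0) ?F"
        using tendsto_add[OF _ tendsto_mult[OF tendsto_const[of C] R]] by simp
    qed
  qed
qed

end
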